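(* Let $\mathcal{A}=(\mathcal{H},|s_0\rangle,\Sigma,\{U_\sigma\},F)$ be a quantum automaton, $w\in\Sigma^\omega$ and $\lambda\in[0,1)$. Then $w\in\mathcal{L}^{>\lambda}(\mathcal{A}|\mathrm{D})$ if and only if there exist a real $\varepsilon>0$ and a unit vector $|\psi\rangle\in F$ such that $w=u_0u_1u_2\cdots$ with finite words $u_i$ satisfying: $u_0\in\mathcal{L}^{>\lambda+\varepsilon}(\mathcal{A}_{s_0,\psi}|\mathrm{MO})$, and $u_1,u_2,\ldots\in\mathcal{L}^{>\lambda+\varepsilon}(\mathcal{A}_{\psi,\psi}|\mathrm{MO})\setminus\{\epsilon\}$.
   Context: A quantum automaton is a tuple $\mathcal{A}=(\mathcal{H},|s_0\rangle,\Sigma,\{U_\sigma:\sigma\in\Sigma\},F)$ where $\mathcal{H}$ is a finite-dimensional complex Hilbert space, $|s_0\rangle$ a unit vector, $\Sigma$ a finite alphabet, each $U_\sigma$ unitary, and $F$ a subspace. For finite $x=\sigma_1\cdots\sigma_m$, $U_x=U_{\sigma_m}\cdots U_{\sigma_1}$ ($U_\epsilon=I$, $\epsilon$ the empty word); for a quantum automaton $\mathcal{C}$ with initial state $|c_0\rangle$ and accepting space $G$ (projection $P_G$), $f^{\mathrm{MO}}_{\mathcal{C}}(x)=\|P_GU_x|c_0\rangle\|^2$ and $\mathcal{L}^{>\mu}(\mathcal{C}|\mathrm{MO})=\{x\in\Sigma^*:f^{\mathrm{MO}}_{\mathcal{C}}(x)>\mu\}$. For unit vectors $|u\rangle,|v\rangle\in\mathcal{H}$,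 $\mathcal{A}_{u,v}=(\mathcal{H},|u\rangle,\Sigma,\{U_\sigma\},\mathrm{span}\{|v\rangle\})$, so $f^{\mathrm{MO}}_{\mathcal{A}_{u,v}}(x)=|\langle v|U_x|u\rangle|^2$. Disturbing acceptance: for $w=\sigma_1\sigma_2\cdots\in\Sigma^\omega$, a unit $|\psi\rangle\in F$ and checkpoints $0\le n_1<n_2<\cdots$, the disturbing run is $|s_0\rangle$ and for $n\ge1$: $|s_n\rangle=U_{\sigma_n}|\psi\rangle$ if $n-1=n_i$ for some $i$, else $|s_n\rangle=U_{\sigma_n}|s_{n-1}\rangle$; $f^{\mathrm{D}}_{\mathcal{A}}(w)=\sup_{|\psi\rangle}\sup_{\{n_i\}}\inf_{i\ge1}|\langle\psi|s_{n_i}\rangle|^2$ over unit $|\psi\rangle\in F$ and strictly increasing checkpoint sequences, and $\mathcal{L}^{>\lambda}(\mathcal{A}|\mathrm{D})=\{w\in\Sigma^\omega:f^{\mathrm{D}}_{\mathcal{A}}(w)>\lambda\}$. *)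

theory Defs
  imports "HOL-Analysis.Analysis"
begin

text \<open>Finite-dimensional complex Hilbert space: complex ^ 'n with 'n a finite index type.
  Hermitian inner product, antilinear in the first argument.\<close>
definition cinner :: "complex ^ 'n \<Rightarrow> complex ^ 'n \<Rightarrow> complex" where
  "cinner x y = (\<Sum>i\<in>UNIV. cnj (x $ i) * y $ i)"

definition cadjoint :: "complex ^ 'n ^ 'n \<Rightarrow> complex ^ 'n ^ 'n" where
  "cadjoint A = (\<chi> i j. cnj (A $ j $ i))"

definition unitary :: "complex ^ 'n ^ 'n \<Rightarrow> bool" where
  "unitary U \<longleftrightarrow> U ** cadjoint U = mat 1 \<and> cadjoint U ** U = mat 1"

definition csubspace :: "(complex ^ 'n) set \<Rightarrow> bool" where
  "csubspace F \<longleftrightarrow> 0 \<in> F \<and> (\<forall>x\<in>F. \<forall>y\<in>F. x + y \<in> F)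
     \<and> (\<forall>c::complex. \<forall>x\<in>F. c *s x \<in> F)"

definition run_word :: "('a \<Rightarrow> complex ^ 'n ^ 'n) \<Rightarrow> 'a list \<Rightarrow> complex ^ 'n \<Rightarrow> complex ^ 'n" where
  "run_word U x v = fold (\<lambda>\<sigma> s. U \<sigma> *v s) x v"

definition f_MO_uv :: "('a \<Rightarrow> complex ^ 'n ^ 'n) \<Rightarrow> complex ^ 'n \<Rightarrow> complex ^ 'n \<Rightarrow> 'a list \<Rightarrow> real" where
  "f_MO_uv U u v x = (cmod (cinner v (run_word U x u)))\<^sup>2"

definition L_MO_uv :: "('a \<Rightarrow> complex ^ 'n ^ 'n) \<Rightarrow> complex ^ 'n \<Rightarrow> complex ^ 'n \<Rightarrow> real \<Rightarrow> 'a list set" where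
  "L_MO_uv U u v \<mu> = {x. f_MO_uv U u v x > \<mu>}"

text \<open>Disturbing run. Infinite word w = w 0, w 1, ... (so sigma_n = w (n-1));
  checkpoints n_1 < n_2 < ... are ns 0 < ns 1 < ... .\<close>
fun drun :: "('a \<Rightarrow> complex ^ 'n ^ 'n) \<Rightarrow> complex ^ 'n \<Rightarrow> (nat \<Rightarrow> 'a) \<Rightarrow> complex ^ 'n
               \<Rightarrow> (nat \<Rightarrow> nat) \<Rightarrow> nat \<Rightarrow> complex ^ 'n" where
  "drun U s0 w psi ns 0 = s0"
| "drun U s0 w psi ns (Suc n) =
     U (w n) *v (if n \<in> range ns then psi else drun U s0 w psi ns n)"

text \<open>Disturbing acceptance value; the supremum over the empty set is taken to be 0
  (inserting 0 does not change the supremum otherwise, as all values are nonnegative).\<close>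
definition f_D :: "('a \<Rightarrow> complex ^ 'n ^ 'n) \<Rightarrow> complex ^ 'n \<Rightarrow> (complex ^ 'n) set \<Rightarrow> (nat \<Rightarrow> 'a) \<Rightarrow> real" where
  "f_D U s0 F w = Sup (insert 0
     {(INF i. (cmod (cinner psi (drun U s0 w psi ns (ns i))))\<^sup>2) | psi ns.
        psi \<in> F \<and> norm psi = 1 \<and> strict_mono ns})"

definition L_D :: "('a \<Rightarrow> complex ^ 'n ^ 'n) \<Rightarrow> complex ^ 'n \<Rightarrow> (complex ^ 'n) set \<Rightarrow> real \<Rightarrow> (nat \<Rightarrow> 'a) set" where
  "L_D U s0 F lam = {w. f_D U s0 F w > lam}"

text \<open>w is the infinite concatenation u 0 u 1 u 2 ...: every finite prefix concatenation
  u 0 @ ... @ u n is a prefix of w.\<close>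
definition is_concat :: "(nat \<Rightarrow> 'a) \<Rightarrow> (nat \<Rightarrow> 'a list) \<Rightarrow> bool" where
  "is_concat w u \<longleftrightarrow> (\<forall>n. let p = concat (map u [0..<Suc n]) in p = map w [0..<length p])"

end

theory Submission
  imports Defs
begin

lemma cinner_adj: "cinner (A *v x) y = cinner x (cadjoint A *v y)"
proof -
  have "cinner (A *v x) y = (\<Sum>i\<in>UNIV. \<Sum>j\<in>UNIV. cnj (A$i$j) * cnj (x$j) * y$i)"
    by (simp add: cinner_def matrix_vector_mult_def cnj_sum sum_distrib_right mult.assoc)
  also have "\<dots> = (\<Sum>j\<in>UNIV. \<Sum>i\<in>UNIV. cnj (A$i$j) * cnj (x$j) * y$i)"
    by (rule sum.swap)
  also have "\<dots> = cinner x (cadjoint A *v y)"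
    by (simp add: cinner_def matrix_vector_mult_def cadjoint_def sum_distrib_left mult.commute mult.left_commute)
  finally show ?thesis .
qed

lemma cinner_self: "cinner x x = complex_of_real ((norm x)^2)"
proof -
  have "(norm x)^2 = (\<Sum>i\<in>UNIV. (cmod (x$i))^2)"
    by (simp add: norm_vec_def L2_set_def sum_nonneg)
  moreover have "cinner x x = (\<Sum>i\<in>UNIV. complex_of_real ((cmod (x$i))^2))"
    by (simp add: cinner_def complex_norm_square mult.commute del: of_real_power)
  ultimately show ?thesis by (simp only: of_real_sum)
qed

lemma unitary_norm: assumes "unitary A" shows "norm (A *v x) = norm x"
proof -
  have "cinner (A *v x) (A *v x) = cinner x x"
    using assms by (simp add: cinner_adj matrix_vector_mul_assoc unitary_def)
  then have "(norm (A *v x))^2 = (norm x)^2" by (metis cinner_self of_real_eq_iff)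
  then show ?thesis by (simp add: power2_eq_iff_nonneg)
qed

lemma cinner_cs: "cmod (cinner a b) \<le> norm a * norm b"
proof -
  have "cmod (cinner a b) \<le> (\<Sum>i\<in>UNIV. cmod (cnj (a$i) * b$i))"
    unfolding cinner_def by (rule norm_sum)
  also have "\<dots> = (\<Sum>i\<in>UNIV. \<bar>cmod (a$i)\<bar> * \<bar>cmod (b$i)\<bar>)"
    by (simp add: norm_mult)
  also have "\<dots> \<le> norm a * norm b"
    unfolding norm_vec_def by (rule L2_set_mult_ineq)
  finally show ?thesis .
qed

lemma run_word_Cons: "run_word U (a # x) v = run_word U x (U a *v v)"
  by (simp add: run_word_def)

lemma run_word_norm: assumes "\<forall>\<sigma>. unitary (U \<sigma>)" shows "norm (run_word U x v) = norm v"
  using assms by (induction x arbitrary: v) (auto simp: run_word_def unitary_norm)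

lemma drun_norm: assumes "\<forall>\<sigma>. unitary (U \<sigma>)" "norm s0 = 1" "norm psi = 1"
  shows "norm (drun U s0 w psi ns n) = 1"
  using assms by (induction n) (auto simp: unitary_norm)

lemma drun_seg:
  assumes "\<And>j. k \<le> j \<Longrightarrow> j < k + length x \<Longrightarrow> j \<notin> range ns"
    and "x = map w [k..<k + length x]"
  shows "drun U s0 w psi ns (k + length x) = run_word U x (drun U s0 w psi ns k)"
  using assms
proof (induction x arbitrary: k)
  case Nil
  then show ?case by (simp add: run_word_def)
next
  case (Cons a x)
  have k: "k \<notin> range ns" using Cons.prems(1)[of k] by simp
  have wa: "a = w k" and xs: "x = map w [Suc k..<Suc k + length x]"
    using Cons.prems(2) by (simp_all add: upt_conv_Cons del: upt_Suc)
  have "drun U s0 w psi ns (Suc k + length x) = run_word U x (drun U s0 w psi ns (Suc k))"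
    by (rule Cons.IH) (use Cons.prems(1) xs in auto)
  then show ?case using k wa by (simp add: run_word_Cons)
qed

lemma drun_seg2:
  assumes "k \<in> range ns" "x \<noteq> []"
    and "\<And>j. k < j \<Longrightarrow> j < k + length x \<Longrightarrow> j \<notin> range ns"
    and "x = map w [k..<k + length x]"
  shows "drun U s0 w psi ns (k + length x) = run_word U x psi"
proof -
  obtain a y where x: "x = a # y" using assms(2) by (cases x) auto
  have wa: "a = w k" and ys: "y = map w [Suc k..<Suc k + length y]"
    using assms(4) x by (simp_all add: upt_conv_Cons del: upt_Suc)
  have "drun U s0 w psi ns (Suc k + length y) = run_word U y (drun U s0 w psi ns (Suc k))"
    by (rule drun_seg) (use assms(3) x ys in auto)
  then show ?thesis using assms(1) wa x by (simp add: run_word_Cons)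
qed

lemma upt_split: "i \<le> j \<Longrightarrow> j \<le> k \<Longrightarrow> [i..<k] = [i..<j] @ [j..<k]"
  by (metis le_add_diff_inverse upt_add_eq_append)

lemma sm_gap: assumes "strict_mono (ns::nat\<Rightarrow>nat)" "ns i < j" "j < ns (Suc i)" shows "j \<notin> range ns"
proof
  assume "j \<in> range ns" then obtain m where m: "j = ns m" by auto
  have "i < m" using assms(2) m strict_mono_less[OF assms(1)] by auto
  moreover have "m < Suc i" using assms(3) m strict_mono_less[OF assms(1)] by auto
  ultimately show False by simp
qed

lemma sm_first: assumes "strict_mono (ns::nat\<Rightarrow>nat)" "j < ns 0" shows "j \<notin> range ns"
  using assms strict_mono_less[OF assms(1)] by auto

theorem proposition6:
  fixes U :: "'a::finite \<Rightarrow> complex ^ 'n ^ 'n"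
    and s0 :: "complex ^ 'n"
    and F :: "(complex ^ 'n) set"
    and w :: "nat \<Rightarrow> 'a"
    and lam :: real
  assumes "\<forall>\<sigma>. unitary (U \<sigma>)"
    and "norm s0 = 1"
    and "csubspace F"
    and "0 \<le> lam" and "lam < 1"
  shows "w \<in> L_D U s0 F lam \<longleftrightarrow>
    (\<exists>\<epsilon>>0. \<exists>psi. psi \<in> F \<and> norm psi = 1 \<and>
       (\<exists>u :: nat \<Rightarrow> 'a list. is_concat w u \<and>
          u 0 \<in> L_MO_uv U s0 psi (lam + \<epsilon>) \<and>
          (\<forall>i\<ge>1. u i \<in> L_MO_uv U psi psi (lam + \<epsilon>) - {[]})))"
proof -
  define g where "g = (\<lambda>psi ns i. (cmod (cinner psi (drun U s0 w psi ns (ns i))))^2)"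
  define S where "S = {(INF i. g psi ns i) | psi ns. psi \<in> F \<and> norm psi = 1 \<and> strict_mono ns}"
  have fD: "f_D U s0 F w = Sup (insert 0 S)" by (simp add: f_D_def S_def g_def)
  have gb: "0 \<le> g psi ns i \<and> g psi ns i \<le> 1" if "norm psi = 1" for psi ns i
  proof -
    have "cmod (cinner psi (drun U s0 w psi ns (ns i))) \<le> norm psi * norm (drun U s0 w psi ns (ns i))"
      by (rule cinner_cs)
    also have "\<dots> = 1" using drun_norm[OF assms(1,2) that] that by simp
    finally show ?thesis unfolding g_def by (simp add: power_le_one)
  qed
  have bddb: "bdd_below (range (g psi ns))" if "norm psi = 1" for psi ns
    using gb[OF that] by (intro bdd_belowI[where m=0]) auto
  have bdd: "bdd_above (insert 0 S)"
  proof (rule bdd_aboveI[where M=1])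
    fix x assume "x \<in> insert 0 S"
    then show "x \<le> 1"
    proof
      assume "x \<in> S"
      then obtain psi ns where x: "x = (INF i. g psi ns i)" and p: "norm psi = 1" unfolding S_def by auto
      have "x \<le> g psi ns 0" unfolding x by (rule cINF_lower[OF bddb[OF p]]) simp
      then show ?thesis using gb[OF p, of ns 0] by linarith
    qed simp
  qed
  show ?thesis
  proof
    assume "w \<in> L_D U s0 F lam"
    then have "lam < Sup (insert 0 S)" by (simp add: L_D_def fD)
    then obtain x where x: "x \<in> insert 0 S" "lam < x" using less_cSup_iff[OF _ bdd] by blast
    then have "x \<in> S" using assms(4) by auto
    then obtain psi ns where xd: "x = (INF i. g psi ns i)" and p: "psi \<in> F" "norm psi = 1" "strict_mono ns"
      unfolding S_def by auto
    define \<epsilon> where "\<epsilon> = (x - lam) / 2"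
    have ep: "\<epsilon> > 0" using x(2) by (simp add: \<epsilon>_def)
    have gx: "g psi ns i > lam + \<epsilon>" for i
    proof -
      have "x \<le> g psi ns i" unfolding xd by (rule cINF_lower[OF bddb[OF p(2)]]) simp
      then show ?thesis using x(2) unfolding \<epsilon>_def by (simp add: field_simps)
    qed
    define u where "u = (\<lambda>i. if i = 0 then map w [0..<ns 0] else map w [ns (i-1)..<ns i])"
    have mono1: "ns i \<le> ns (Suc i)" for i using strict_mono_less_eq[OF p(3)] by simp
    have cc: "concat (map u [0..<Suc n]) = map w [0..<ns n]" for n
    proof (induction n)
      case 0 then show ?case by (simp add: u_def)
    next
      case (Suc n)
      have "concat (map u [0..<Suc (Suc n)]) = map w [0..<ns n] @ map w [ns n..<ns (Suc n)]"
        using Suc by (simp add: u_def)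
      also have "\<dots> = map w [0..<ns (Suc n)]"
        using upt_split[of 0 "ns n" "ns (Suc n)"] mono1[of n] by simp
      finally show ?case .
    qed
    have ic: "is_concat w u" unfolding is_concat_def Let_def cc by simp
    have u0: "u 0 \<in> L_MO_uv U s0 psi (lam + \<epsilon>)"
    proof -
      have "drun U s0 w psi ns (0 + length (u 0)) = run_word U (u 0) (drun U s0 w psi ns 0)"
        by (rule drun_seg) (use sm_first[OF p(3)] in \<open>auto simp: u_def\<close>)
      then have "drun U s0 w psi ns (ns 0) = run_word U (u 0) s0" by (simp add: u_def)
      then show ?thesis using gx[of 0] by (simp add: L_MO_uv_def f_MO_uv_def g_def)
    qed
    have uS: "u (Suc i) \<in> L_MO_uv U psi psi (lam + \<epsilon>) - {[]}" for i
    proof -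
      have lt: "ns i < ns (Suc i)" using strict_mono_less[OF p(3)] by simp
      have ue: "u (Suc i) = map w [ns i..<ns (Suc i)]" by (simp add: u_def)
      have "drun U s0 w psi ns (ns i + length (u (Suc i))) = run_word U (u (Suc i)) psi"
        by (rule drun_seg2) (use lt sm_gap[OF p(3), of i] in \<open>auto simp: ue\<close>)
      then have "drun U s0 w psi ns (ns (Suc i)) = run_word U (u (Suc i)) psi" using lt by (simp add: ue)
      then show ?thesis using gx[of "Suc i"] lt by (simp add: L_MO_uv_def f_MO_uv_def g_def ue)
    qed
    have "\<forall>i\<ge>1. u i \<in> L_MO_uv U psi psi (lam + \<epsilon>) - {[]}"
    proof (intro allI impI)
      fix i :: nat assume "1 \<le> i"
      then obtain m where "i = Suc m" by (cases i) auto
      then show "u i \<in> L_MO_uv U psi psi (lam + \<epsilon>) - {[]}" using uS by simp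
    qed
    then show "\<exists>\<epsilon>>0. \<exists>psi. psi \<in> F \<and> norm psi = 1 \<and>
       (\<exists>u :: nat \<Rightarrow> 'a list. is_concat w u \<and>
          u 0 \<in> L_MO_uv U s0 psi (lam + \<epsilon>) \<and>
          (\<forall>i\<ge>1. u i \<in> L_MO_uv U psi psi (lam + \<epsilon>) - {[]}))"
      using ep p ic u0 by blast
  next
    assume "\<exists>\<epsilon>>0. \<exists>psi. psi \<in> F \<and> norm psi = 1 \<and>
       (\<exists>u :: nat \<Rightarrow> 'a list. is_concat w u \<and>
          u 0 \<in> L_MO_uv U s0 psi (lam + \<epsilon>) \<and>
          (\<forall>i\<ge>1. u i \<in> L_MO_uv U psi psi (lam + \<epsilon>) - {[]}))"
    then obtain \<epsilon> psi u where ep: "\<epsilon> > 0" and p: "psi \<in> F" "norm psi = 1"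
      and ic: "is_concat w u" and u0: "u 0 \<in> L_MO_uv U s0 psi (lam + \<epsilon>)"
      and ui: "\<forall>i\<ge>1. u i \<in> L_MO_uv U psi psi (lam + \<epsilon>) - {[]}" by blast
    define P where "P n = length (concat (map u [0..<Suc n]))" for n
    have cc: "concat (map u [0..<Suc n]) = map w [0..<P n]" for n
      using ic unfolding is_concat_def Let_def P_def by simp
    have uS: "u (Suc n) \<in> L_MO_uv U psi psi (lam + \<epsilon>) - {[]}" for n using ui by simp
    have PS: "P (Suc n) = P n + length (u (Suc n))" for n by (simp add: P_def)
    have sm: "strict_mono P"
      unfolding strict_mono_Suc_iff using PS uS by (simp add: less_add_same_cancel1)
    have ue0: "u 0 = map w [0..<P 0]" using cc[of 0] by simp
    have ueS: "u (Suc n) = map w [P n..<P (Suc n)]" for n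
    proof -
      have "map w [0..<P n] @ u (Suc n) = map w [0..<P (Suc n)]"
      proof -
        have "concat (map u [0..<Suc (Suc n)]) = concat (map u [0..<Suc n]) @ u (Suc n)"
          by (simp only: upt_Suc_append[of 0 "Suc n", OF le0] map_append concat_append) simp
        then show ?thesis by (simp only: cc)
      qed
      also have "\<dots> = map w [0..<P n] @ map w [P n..<P (Suc n)]"
        using upt_split[of 0 "P n" "P (Suc n)"] PS[of n] by simp
      finally show ?thesis by simp
    qed
    have g0: "g psi P 0 > lam + \<epsilon>"
    proof -
      have "drun U s0 w psi P (0 + length (u 0)) = run_word U (u 0) (drun U s0 w psi P 0)"
        by (rule drun_seg) (use sm_first[OF sm] ue0 in auto)
      then have "drun U s0 w psi P (P 0) = run_word U (u 0) s0" by (simp add: ue0)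
      then show ?thesis using u0 by (simp add: L_MO_uv_def f_MO_uv_def g_def)
    qed
    have gS: "g psi P (Suc i) > lam + \<epsilon>" for i
    proof -
      have ne: "u (Suc i) \<noteq> []" using uS[of i] by simp
      have "drun U s0 w psi P (P i + length (u (Suc i))) = run_word U (u (Suc i)) psi"
      proof (rule drun_seg2)
        show "P i \<in> range P" by simp
        show "u (Suc i) \<noteq> []" by (rule ne)
        have e: "P i + length (u (Suc i)) = P (Suc i)" by (simp only: PS)
        show "\<And>j. P i < j \<Longrightarrow> j < P i + length (u (Suc i)) \<Longrightarrow> j \<notin> range P"
          using sm_gap[OF sm, of i] unfolding e by blast
        show "u (Suc i) = map w [P i..<P i + length (u (Suc i))]" unfolding e by (rule ueS)
      qed
      then have "drun U s0 w psi P (P (Suc i)) = run_word U (u (Suc i)) psi" by (simp add: PS)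
      then show ?thesis using uS[of i] by (simp add: L_MO_uv_def f_MO_uv_def g_def)
    qed
    have "lam + \<epsilon> \<le> (INF i. g psi P i)"
    proof (rule cINF_greatest)
      fix i show "lam + \<epsilon> \<le> g psi P i"
        using g0 gS by (cases i) (auto simp: less_imp_le)
    qed simp
    moreover have "(INF i. g psi P i) \<in> insert 0 S" unfolding S_def using p sm by blast
    then have "(INF i. g psi P i) \<le> Sup (insert 0 S)" by (rule cSup_upper[OF _ bdd])
    ultimately show "w \<in> L_D U s0 F lam" using ep by (simp add: L_D_def fD)
  qed
qed

end
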